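(* Let $d\ge2$ and let $f:\{0,1\}^r\to\{0,1\}$ satisfy $f(0,\dots,0)=1$. If $f$ contains $\mathrm{NAND}_d$ as a restriction and does not contain $\mathrm{IMPL}$ as a $0$-restriction, then $f$ contains $\mathrm{NAND}_d$ as a $0$-restriction.
   Context: $g:\{0,1\}^s\to\{0,1\}$ is a restriction of $f$ if there are pairwise disjoint, possibly empty, sets $X_1,\dots,X_s,Z_0,Z_1$ with union $[r]$ such that $g(x_1,\dots,x_s)=f(u)$. Here $u_i=x_j$ for $i\in X_j$, $u_i=0$ for $i\in Z_0$, and $u_i=1$ for $i\in Z_1$. It is a $0$-restriction if this holds with $Z_1=\emptyset$. $\mathrm{IMPL}(y_1,y_2)=\overline{y_1}\vee y_2$, and $\mathrm{NAND}_d(y_1,\dots,y_d)=\overline{y_1\wedge\cdots\wedge y_d}$. *)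

theory Defs
  imports Main
begin

text \<open>A Boolean function of arity r is modelled as f :: bool list \<Rightarrow> bool,
  evaluated on lists of length r (True = 1, False = 0).
  A restriction pattern is a map sigma from positions i < r to either
  Inl j (i belongs to X_j, j < s) or Inr b (i belongs to Z_b).\<close>

definition subst_input :: "nat \<Rightarrow> (nat \<Rightarrow> nat + bool) \<Rightarrow> bool list \<Rightarrow> bool list" where
  "subst_input r sigma x = map (\<lambda>i. case sigma i of Inl j \<Rightarrow> x ! j | Inr b \<Rightarrow> b) [0..<r]"

definition is_restriction ::
  "nat \<Rightarrow> (bool list \<Rightarrow> bool) \<Rightarrow> nat \<Rightarrow> (bool list \<Rightarrow> bool) \<Rightarrow> bool" where
  "is_restriction s g r f \<longleftrightarrow>
     (\<exists>sigma :: nat \<Rightarrow> nat + bool.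
        (\<forall>i<r. \<forall>j. sigma i = Inl j \<longrightarrow> j < s) \<and>
        (\<forall>x. length x = s \<longrightarrow> g x = f (subst_input r sigma x)))"

definition is_0_restriction ::
  "nat \<Rightarrow> (bool list \<Rightarrow> bool) \<Rightarrow> nat \<Rightarrow> (bool list \<Rightarrow> bool) \<Rightarrow> bool" where
  "is_0_restriction s g r f \<longleftrightarrow>
     (\<exists>sigma :: nat \<Rightarrow> nat + bool.
        (\<forall>i<r. \<forall>j. sigma i = Inl j \<longrightarrow> j < s) \<and>
        (\<forall>i<r. sigma i \<noteq> Inr True) \<and>
        (\<forall>x. length x = s \<longrightarrow> g x = f (subst_input r sigma x)))"

definition IMPL :: "bool list \<Rightarrow> bool" where
  "IMPL y = (\<not> y ! 0 \<or> y ! 1)"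

definition NAND :: "nat \<Rightarrow> bool list \<Rightarrow> bool" where
  "NAND d y = (\<not> (\<forall>i<d. y ! i))"

end

theory Submission
  imports Defs
begin

theorem mainTheorem16:
  fixes f :: "bool list \<Rightarrow> bool" and r d :: nat
  assumes "d \<ge> 2"
    and "f (replicate r False)"
    and "is_restriction d (NAND d) r f"
    and "\<not> is_0_restriction 2 IMPL r f"
  shows "is_0_restriction d (NAND d) r f"
proof -
  obtain sigma where s1: "\<forall>i<r. \<forall>j. sigma i = Inl j \<longrightarrow> j < d"
    and s2: "\<forall>x. length x = d \<longrightarrow> NAND d x = f (subst_input r sigma x)"
    using assms(3) unfolding is_restriction_def by blast
  define sigma' where "sigma' i = (case sigma i of Inr True \<Rightarrow> Inl 0 | v \<Rightarrow> v)" for i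
  define sigma0 where "sigma0 i = (case sigma i of Inr True \<Rightarrow> Inr False | v \<Rightarrow> v)" for i
  have key: "f (subst_input r sigma0 x)" if lx: "length x = d" and x0: "\<not> x ! 0" for x
  proof (rule ccontr)
    assume neg: "\<not> f (subst_input r sigma0 x)"
    define tau where "tau i = (case sigma i of Inl j \<Rightarrow> (if x ! j then Inl (0::nat) else Inr False)
        | Inr True \<Rightarrow> Inl 1 | Inr False \<Rightarrow> Inr False)" for i :: nat
    have tau_eq: "subst_input r tau [a,b] = map (\<lambda>i. case sigma i of Inl j \<Rightarrow> (x!j \<and> a) | Inr c \<Rightarrow> (c \<and> b)) [0..<r]" for a b
      unfolding subst_input_def tau_def
      by (rule map_cong) (auto split: sum.split bool.split)
    have "is_0_restriction 2 IMPL r f"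
      unfolding is_0_restriction_def
    proof (intro exI conjI allI impI)
      show "j < 2" if "i < r" "tau i = Inl j" for i j
        using that by (auto simp: tau_def split: sum.splits bool.splits if_splits)
      show "tau i \<noteq> Inr True" if "i < r" for i
        by (auto simp: tau_def split: sum.splits bool.splits if_splits)
      fix y :: "bool list" assume ly: "length y = 2"
      then obtain a b where y: "y = [a,b]"
        by (cases y; cases "tl y") auto
      have ff: "subst_input r tau [False,False] = replicate r False"
        unfolding tau_eq
        by (subst map_cong[where g="\<lambda>_. False", OF refl]) (auto split: sum.split simp: map_replicate_const)
      have ft: "subst_input r tau [False,True] = subst_input r sigma (replicate d False)"
        unfolding tau_eq unfolding subst_input_def
        by (rule map_cong) (auto split: sum.split dest: s1[rule_format])
      have tf: "subst_input r tau [True,False] = subst_input r sigma0 x"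
        unfolding tau_eq unfolding subst_input_def sigma0_def
        by (rule map_cong) (auto split: sum.split bool.split)
      have tt: "subst_input r tau [True,True] = subst_input r sigma x"
        unfolding tau_eq unfolding subst_input_def
        by (rule map_cong) (auto split: sum.split bool.split)
      have n0: "NAND d (replicate d False)" using assms(1) by (auto simp: NAND_def intro!: exI[where x=0])
      have nx: "NAND d x" unfolding NAND_def using assms(1) x0 by (auto intro!: exI[where x=0])
      show "IMPL y = f (subst_input r tau y)"
        using ff ft tf tt n0 nx neg assms(2) s2 lx
        by (cases a; cases b) (auto simp: y IMPL_def)
    qed
    then show False using assms(4) by blast
  qed
  show ?thesis
    unfolding is_0_restriction_def
  proof (intro exI conjI allI impI)
    show "j < d" if "i < r" "sigma' i = Inl j" for i j
      using that s1 assms(1) by (auto simp: sigma'_def split: sum.splits bool.splits)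
    show "sigma' i \<noteq> Inr True" if "i < r" for i
      by (auto simp: sigma'_def split: sum.splits bool.splits)
    fix x :: "bool list" assume lx: "length x = d"
    show "NAND d x = f (subst_input r sigma' x)"
    proof (cases "x ! 0")
      case True
      have "subst_input r sigma' x = subst_input r sigma x"
        unfolding subst_input_def sigma'_def
        by (rule map_cong) (auto simp: True split: sum.split bool.split)
      then show ?thesis using s2 lx by simp
    next
      case False
      have "subst_input r sigma' x = subst_input r sigma0 x"
        unfolding subst_input_def sigma'_def sigma0_def
        by (rule map_cong) (auto simp: False split: sum.split bool.split)
      moreover have "NAND d x" unfolding NAND_def using assms(1) False by (auto intro!: exI[where x=0])
      ultimately show ?thesis using key[OF lx False] by simp
    qed
  qed
qed

end
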